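(* Let $M$ be an $\aleph_1$-strongly collectionwise Hausdorff manifold. If $w\mathsf{S}(M,\mathbb{R})$ holds, then $M$ is $\omega_1$-compact.
   Context: All spaces are Hausdorff and all maps continuous. A manifold is a connected Hausdorff space locally homeomorphic to $\mathbb{R}^n$. A space is $\aleph_1$-strongly collectionwise Hausdorff if every closed discrete subset $\{x_\alpha:\alpha<\lambda\}$ with $\lambda\le\aleph_1$ can be expanded to a discrete collection of open sets $\{U_\alpha:\alpha<\lambda\}$ with $x_\alpha\in U_\alpha$ (discrete: each point has a neighbourhood meeting at most one member). A space is $\omega_1$-compact if every closed discrete subspace is countable. For a non-Lindelöf space $X$ and a space $Y$, $w\mathsf{S}(X,Y)$ means: for every continuous $f:X\to Y$ there are a Lindelöf $Z\subset X$ and a continuous $r:X\to Z$ with $(f\circ r)\restriction(X\setminus Z)=f\restriction(X\setminus Z)$. (For Lindelöf $X$ the property is regarded as trivially true.) *)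

theory Defs
  imports "HOL-Analysis.Analysis"
begin

definition is_manifold :: "'a topology \<Rightarrow> bool" where
  "is_manifold X \<longleftrightarrow> connected_space X \<and> Hausdorff_space X \<and>
     (\<exists>n. \<forall>x \<in> topspace X. \<exists>U. openin X U \<and> x \<in> U \<and>
            subtopology X U homeomorphic_space Euclidean_space n)"

definition closed_discrete_in :: "'a topology \<Rightarrow> 'a set \<Rightarrow> bool" where
  "closed_discrete_in X D \<longleftrightarrow> closedin X D \<and>
     (\<forall>x \<in> D. \<exists>U. openin X U \<and> U \<inter> D = {x})"

text \<open>aleph_1-strongly collectionwise Hausdorff: every closed discrete set of
  cardinality at most aleph_1 (= cardSuc natLeq) expands to a discrete family of open sets.\<close>
definition aleph1_strongly_cwH :: "'a topology \<Rightarrow> bool" where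
  "aleph1_strongly_cwH X \<longleftrightarrow>
     (\<forall>D. closed_discrete_in X D \<and> (card_of D, cardSuc natLeq) \<in> ordLeq \<longrightarrow>
        (\<exists>U. (\<forall>x \<in> D. openin X (U x) \<and> x \<in> U x) \<and>
             (\<forall>p \<in> topspace X. \<exists>V. openin X V \<and> p \<in> V \<and>
                (\<forall>x \<in> D. \<forall>y \<in> D. V \<inter> U x \<noteq> {} \<and> V \<inter> U y \<noteq> {} \<longrightarrow> x = y))))"

definition omega1_compact :: "'a topology \<Rightarrow> bool" where
  "omega1_compact X \<longleftrightarrow> (\<forall>D. closed_discrete_in X D \<longrightarrow> countable D)"

definition wS :: "'a topology \<Rightarrow> 'b topology \<Rightarrow> bool" where
  "wS X Y \<longleftrightarrow> Lindelof_space X \<or>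
     (\<forall>f. continuous_map X Y f \<longrightarrow>
        (\<exists>Z r. Z \<subseteq> topspace X \<and> Lindelof_space (subtopology X Z) \<and>
               continuous_map X (subtopology X Z) r \<and>
               (\<forall>x \<in> topspace X - Z. f (r x) = f x)))"

end

theory Submission
  imports Defs "HOL-Analysis.Analysis"
begin


definition Wf :: "real \<Rightarrow> real \<Rightarrow> real" where
  "Wf m s = max 0 (min (3*(2+m)*(1-s)) (max (3 - 3*(3-m)* s) (m + 6*(s - 1/3))))"

lemma Wf_alt: "Wf m s = max 0 (min (6 + 3*m - 6* s - 3*(m* s)) (max (3 - 9* s + 3*(m* s)) (m + 6* s - 2)))"
  unfolding Wf_def by (simp add: algebra_simps)

lemma Wf_cont: "continuous_on A (Wf m)"
  unfolding Wf_def by (intro continuous_intros)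

lemma Wf_0: "0 < m \<Longrightarrow> m < 1 \<Longrightarrow> Wf m 0 = 3"
  unfolding Wf_alt by (simp add: max_def min_def)

lemma Wf_third: "0 < m \<Longrightarrow> m < 1 \<Longrightarrow> Wf m (1/3) = m"
  unfolding Wf_alt by (simp add: max_def min_def)

lemma Wf_twothird: "0 < m \<Longrightarrow> m < 1 \<Longrightarrow> Wf m (2/3) = 2 + m"
  unfolding Wf_alt by (simp add: max_def min_def)

lemma Wf_z: "z = m * s \<Longrightarrow> Wf m s = max 0 (min (6 + 3*m - 6 * s - 3*z) (max (3 - 9 * s + 3*z) (m + 6 * s - 2)))"
  unfolding Wf_alt by simp

lemma zfacts: "0 < (m::real) \<Longrightarrow> m < 1 \<Longrightarrow> 0 \<le> s \<Longrightarrow> 0 \<le> m * s \<and> m * s \<le> s \<and> (s \<le> 1/3 \<longrightarrow> m * s \<le> m/3) \<and> (s \<ge> 1/3 \<longrightarrow> m * s \<ge> m/3) \<and> (s \<le> 2/3 \<longrightarrow> m * s \<le> 2*m/3) \<and> (s \<ge> 2/3 \<longrightarrow> m * s \<ge> 2*m/3) \<and> (s \<le> 1 \<longrightarrow> m * s \<le> m) \<and> (s \<ge> 1 \<longrightarrow> m * s \<ge> m) \<and> (s > 0 \<longrightarrow> m * s < s) \<and> (s \<le> 1/3 \<longrightarrow> m * s \<ge> s + m/3 - 1/3) \<and> (s \<le> 2/3 \<longrightarrow> m * s \<ge> s + 2*m/3 - 2/3) \<and> (s \<le> 1 \<longrightarrow> m * s \<ge> s + m - 1) \<and> (s \<ge>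 1/3 \<longrightarrow> m * s \<le> s + m/3 - 1/3) \<and> (s \<ge> 2/3 \<longrightarrow> m * s \<le> s + 2*m/3 - 2/3) \<and> (s \<ge> 1 \<longrightarrow> m * s \<le> s + m - 1)"
proof -
  assume a: "0 < m" "m < 1" "0 \<le> s"
  have l1: "s \<le> c \<Longrightarrow> m * s \<le> m * c" for c by (rule mult_left_mono) (use a in auto)
  have l2: "c \<le> s \<Longrightarrow> m * c \<le> m * s" for c by (rule mult_left_mono) (use a in auto)
  have "m * s \<le> 1 * s" using a by (intro mult_right_mono) auto
  moreover have "s > 0 \<longrightarrow> m * s < 1 * s" using a by (auto intro: mult_strict_right_mono)
  moreover have k1: "s \<le> c \<Longrightarrow> 0 \<le> c - s - m * c + m * s" for c
  proof -
    assume "s \<le> c" then have "0 \<le> (1 - m) * (c - s)" using a by simp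
    then show ?thesis by (simp add: algebra_simps)
  qed
  moreover have k2: "c \<le> s \<Longrightarrow> c - s - m * c + m * s \<le> 0" for c
  proof -
    assume "c \<le> s" then have "(1 - m) * (c - s) \<le> 0" using a by (simp add: mult_nonneg_nonpos)
    then show ?thesis by (simp add: algebra_simps)
  qed
  ultimately show ?thesis using a k1[of "1/3"] k1[of "2/3"] k1[of 1] k2[of "1/3"] k2[of "2/3"] k2[of 1] l1[of "1/3"] l1[of "2/3"] l1[of 1] l2[of "1/3"] l2[of "2/3"] l2[of 1] by auto
qed

lemma Wf_seg1: "0 < m \<Longrightarrow> m < 1 \<Longrightarrow> 0 \<le> u \<Longrightarrow> u \<le> 1/3 \<Longrightarrow> Wf m u = 3 - 9 * u + 3 * (m * u)"
proof -
  assume a: "0 < m" "m < 1" "0 \<le> u" "u \<le> 1/3"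
  obtain z where zd: "z = m * u" by simp
  have zfs: "0 \<le> z \<and> z \<le> u \<and> (u \<le> 1/3 \<longrightarrow> z \<le> m/3) \<and> (u \<ge> 1/3 \<longrightarrow> z \<ge> m/3) \<and> (u \<le> 2/3 \<longrightarrow> z \<le> 2*m/3) \<and> (u \<ge> 2/3 \<longrightarrow> z \<ge> 2*m/3) \<and> (u \<le> 1 \<longrightarrow> z \<le> m) \<and> (u \<ge> 1 \<longrightarrow> z \<ge> m) \<and> (u > 0 \<longrightarrow> z < u) \<and> (u \<le> 1/3 \<longrightarrow> z \<ge> u + m/3 - 1/3) \<and> (u \<le> 2/3 \<longrightarrow> z \<ge> u + 2*m/3 - 2/3) \<and> (u \<le> 1 \<longrightarrow> z \<ge> u + m - 1) \<and> (u \<ge> 1/3 \<longrightarrow> z \<le> u + m/3 - 1/3) \<and> (u \<ge> 2/3 \<longrightarrow> z \<le> u + 2*m/3 - 2/3) \<and> (u \<ge> 1 \<longrightarrow> z \<le> u + m - 1)" using zfacts[of m u] a unfolding zd[symmetric] by auto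
  have es: "Wf m u = max 0 (min (6 + 3*m - 6 * u - 3*z) (max (3 - 9 * u + 3*z) (m + 6 * u - 2)))" by (rule Wf_z[OF zd])
  have "Wf m u = 3 - 9 * u + 3 * z" using a zfs es by (simp add: max_def min_def split: if_splits; linarith)
  then show ?thesis using zd by simp
qed

lemma Wf_seg2: "0 < m \<Longrightarrow> m < 1 \<Longrightarrow> 1/3 \<le> u \<Longrightarrow> u \<le> 2/3 \<Longrightarrow> Wf m u = m + 6 * u - 2"
proof -
  assume a: "0 < m" "m < 1" "1/3 \<le> u" "u \<le> 2/3"
  obtain z where zd: "z = m * u" by simp
  have zfs: "0 \<le> z \<and> z \<le> u \<and> (u \<le> 1/3 \<longrightarrow> z \<le> m/3) \<and> (u \<ge> 1/3 \<longrightarrow> z \<ge> m/3) \<and> (u \<le> 2/3 \<longrightarrow> z \<le> 2*m/3) \<and> (u \<ge> 2/3 \<longrightarrow> z \<ge> 2*m/3) \<and> (u \<le> 1 \<longrightarrow> z \<le> m) \<and> (u \<ge> 1 \<longrightarrow> z \<ge> m) \<and> (u > 0 \<longrightarrow> z < u) \<and> (u \<le> 1/3 \<longrightarrow> z \<ge> u + m/3 - 1/3) \<and> (u \<le> 2/3 \<longrightarrow> z \<ge> u + 2*m/3 - 2/3) \<and> (u \<le> 1 \<longrightarrow> z \<ge> u + m - 1) \<and> (u \<ge> 1/3 \<longrightarrow> z \<le> u + m/3 - 1/3) \<and> (u \<ge> 2/3 \<longrightarrow> z \<le> u + 2*m/3 - 2/3) \<and> (u \<ge> 1 \<longrightarrow>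 z \<le> u + m - 1)" using zfacts[of m u] a unfolding zd[symmetric] by auto
  have es: "Wf m u = max 0 (min (6 + 3*m - 6 * u - 3*z) (max (3 - 9 * u + 3*z) (m + 6 * u - 2)))" by (rule Wf_z[OF zd])
  show ?thesis using a zfs es by (simp add: max_def min_def split: if_splits; linarith)
qed

lemma Wf_seg3: "0 < m \<Longrightarrow> m < 1 \<Longrightarrow> 2/3 \<le> u \<Longrightarrow> Wf m u = max 0 (6 + 3*m - 6 * u - 3 * (m * u))"
proof -
  assume a: "0 < m" "m < 1" "2/3 \<le> u"
  obtain z where zd: "z = m * u" by simp
  have zfs: "0 \<le> z \<and> z \<le> u \<and> (u \<le> 1/3 \<longrightarrow> z \<le> m/3) \<and> (u \<ge> 1/3 \<longrightarrow> z \<ge> m/3) \<and> (u \<le> 2/3 \<longrightarrow> z \<le> 2*m/3) \<and> (u \<ge> 2/3 \<longrightarrow> z \<ge> 2*m/3) \<and> (u \<le> 1 \<longrightarrow> z \<le> m) \<and> (u \<ge> 1 \<longrightarrow> z \<ge> m) \<and> (u > 0 \<longrightarrow> z < u) \<and> (u \<le> 1/3 \<longrightarrow> z \<ge> u + m/3 - 1/3) \<and> (u \<le> 2/3 \<longrightarrow> z \<ge> u + 2*m/3 - 2/3) \<and> (u \<le> 1 \<longrightarrow> z \<ge> u + m - 1) \<and> (u \<ge> 1/3 \<longrightarrow> z \<le> u + m/3 - 1/3) \<and> (u \<ge> 2/3 \<longrightarrow> z \<le> u + 2*m/3 - 2/3) \<and> (u \<ge> 1 \<longrightarrow> z \<le>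 u + m - 1)" using zfacts[of m u] a unfolding zd[symmetric] by auto
  have es: "Wf m u = max 0 (min (6 + 3*m - 6 * u - 3*z) (max (3 - 9 * u + 3*z) (m + 6 * u - 2)))" by (rule Wf_z[OF zd])
  have "Wf m u = max 0 (6 + 3*m - 6 * u - 3 * z)" using a zfs es by (simp add: max_def min_def split: if_splits; linarith)
  then show ?thesis using zd by simp
qed

lemma Wf_cases:
  assumes "0 < m" "m < 1" "0 \<le> u"
  obtains z where "(u \<le> 1/3 \<and> Wf m u = 3 - 9 * u + 3 * z \<and> 0 \<le> z \<and> z \<le> m/3 \<and> z \<ge> u + m/3 - 1/3 \<and> (u > 0 \<longrightarrow> z < u))
  \<or> (1/3 \<le> u \<and> u \<le> 2/3 \<and> Wf m u = m + 6 * u - 2)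
  \<or> (2/3 \<le> u \<and> Wf m u = max 0 (6 + 3*m - 6 * u - 3 * z) \<and> z \<ge> 2*m/3 \<and> (u \<le> 1 \<longrightarrow> z \<le> m) \<and> (u \<ge> 1 \<longrightarrow> z \<ge> m) \<and> (u \<le> 1 \<longrightarrow> z \<ge> u + m - 1))"
proof -
  have z: "0 \<le> m * u \<and> m * u \<le> u \<and> (u \<le> 1/3 \<longrightarrow> m * u \<le> m/3) \<and> (u \<ge> 1/3 \<longrightarrow> m * u \<ge> m/3) \<and> (u \<le> 2/3 \<longrightarrow> m * u \<le> 2*m/3) \<and> (u \<ge> 2/3 \<longrightarrow> m * u \<ge> 2*m/3) \<and> (u \<le> 1 \<longrightarrow> m * u \<le> m) \<and> (u \<ge> 1 \<longrightarrow> m * u \<ge> m) \<and> (u > 0 \<longrightarrow> m * u < u) \<and> (u \<le> 1/3 \<longrightarrow> m * u \<ge> u + m/3 - 1/3) \<and> (u \<le> 2/3 \<longrightarrow> m * u \<ge> u + 2*m/3 - 2/3) \<and> (u \<le> 1 \<longrightarrow> m * u \<ge> u + m - 1) \<and> (u \<ge> 1/3 \<longrightarrow> m * u \<le> u + m/3 - 1/3) \<and> (u \<ge> 2/3 \<longrightarrow> m * u \<le> u + 2*m/3 - 2/3) \<and> (u \<ge> 1 \<longrightarrow> m * u \<le> u + m - 1)" using zfacts[of m u] assms by auto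
  show ?thesis
  proof (cases "u \<le> 1/3")
    case True then show ?thesis using that[of "m * u"] z Wf_seg1 assms by auto
  next
    case False
    then show ?thesis
    proof (cases "u \<le> 2/3")
      case True then show ?thesis using that[of "m * u"] Wf_seg2 assms False by auto
    next
      case False then show ?thesis using that[of "m * u"] z Wf_seg3[of m u] assms by auto
    qed
  qed
qed

lemma Wf_ge1: "0 < m \<Longrightarrow> m < 1 \<Longrightarrow> 1 \<le> s \<Longrightarrow> Wf m s = 0"
  by (rule Wf_cases[of m s]) (auto simp: max_def)

lemma Wf_pos: "0 < m \<Longrightarrow> m < 1 \<Longrightarrow> 0 \<le> s \<Longrightarrow> s < 1 \<Longrightarrow> 0 < Wf m s"
  by (rule Wf_cases[of m s]) (auto simp: max_def)

lemma Wf_eq3: "0 < m \<Longrightarrow> m < 1 \<Longrightarrow> 0 \<le> s \<Longrightarrow> Wf m s = 3 \<Longrightarrow> s = 0"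
  by (rule Wf_cases[of m s]) (auto simp: max_def split: if_splits)

lemma Wf_lt: "0 < m \<Longrightarrow> m < 1 \<Longrightarrow> 0 \<le> s \<Longrightarrow> Wf m s < m \<Longrightarrow> 2/3 < s"
  by (rule Wf_cases[of m s]) (auto simp: max_def split: if_splits)

lemma Wf_gt: "0 < m \<Longrightarrow> m < 1 \<Longrightarrow> 0 \<le> s \<Longrightarrow> Wf m s > 2 + m \<Longrightarrow> s < 1/3"
  by (rule Wf_cases[of m s]) (auto simp: max_def split: if_splits)

lemma Wf_mono1: "0 < m \<Longrightarrow> m < 1 \<Longrightarrow> 0 \<le> s \<Longrightarrow> s \<le> t \<Longrightarrow> t \<le> 1/3 \<Longrightarrow> Wf m t \<le> Wf m s"
proof -
  assume a: "0 < m" "m < 1" "0 \<le> s" "s \<le> t" "t \<le> 1/3"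
  have "m * t - m * s \<le> 1 * t - 1 * s"
  proof -
    have "(1 - m) * (t - s) \<ge> 0" using a by simp
    then show ?thesis by (simp add: algebra_simps)
  qed
  then show ?thesis using a Wf_seg1[of m s] Wf_seg1[of m t] by simp
qed

lemma Wf_mono3: "0 < m \<Longrightarrow> m < 1 \<Longrightarrow> 2/3 \<le> s \<Longrightarrow> s \<le> t \<Longrightarrow> Wf m t \<le> Wf m s"
proof -
  assume a: "0 < m" "m < 1" "2/3 \<le> s" "s \<le> t"
  obtain zs zt where zd: "zs = m * s" "zt = m * t" by simp
  have "zs \<le> zt" unfolding zd using a by (intro mult_left_mono) auto
  moreover have "Wf m s = max 0 (6 + 3*m - 6 * s - 3 * zs)" "Wf m t = max 0 (6 + 3*m - 6 * t - 3 * zt)"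
    using a Wf_seg3[of m s] Wf_seg3[of m t] zd by auto
  ultimately show ?thesis using a by (simp add: max_def)
qed

lemma Wf_small: "0 < a \<Longrightarrow> a < 1 \<Longrightarrow> 0 < b \<Longrightarrow> b < 1 \<Longrightarrow> Wf a (1 - b/9) < b"
proof -
  assume h: "0 < a" "a < 1" "0 < b" "b < 1"
  have "Wf a (1 - b/9) \<le> max 0 (3*(2+a)*(1-(1-b/9)))" unfolding Wf_def by auto
  also have "3*(2+a)*(1-(1-b/9)) = (2+a)*b/3" by (simp add: field_simps)
  also have "(2+a)*b < 3 * b" using h by (intro mult_strict_right_mono) auto
  then have "max 0 ((2+a)*b/3) < b" using h by auto
  finally show ?thesis .
qed


lemma lift_lemma:
  fixes a b :: real and g :: "real \<Rightarrow> real"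
  assumes a: "0 < a" "a < 1" "0 < b" "b < 1"
    and g: "continuous_on {0..1 - b/9} g"
    and gpos: "\<And>t. t \<in> {0..1 - b/9} \<Longrightarrow> 0 \<le> g t"
    and eq: "\<And>t. t \<in> {0..1 - b/9} \<Longrightarrow> Wf b (g t) = Wf a t"
  shows "a = b"
proof (rule ccontr)
  assume ne: "a \<noteq> b"
  define T where "T = 1 - b/9"
  have T: "2/3 < T" "T < 1" using a by (auto simp: T_def)
  have gc: "continuous_on {x..y} g" if "0 \<le> x" "y \<le> T" for x y
    using continuous_on_subset[OF g] that by (auto simp: T_def)
  have E: "Wf b (g t) = Wf a t" "0 \<le> g t" if "0 \<le> t" "t \<le> T" for t
    using eq[of t] gpos[of t] that by (auto simp: T_def)
  have g0: "g 0 = 0"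
    using E[of 0] Wf_0[OF a(1,2)] Wf_eq3[OF a(3,4)] T by auto
  show False
  proof (cases "a < b")
    case True
    have "Wf b (g (1/3)) < b" using E[of "1/3"] T Wf_third[OF a(1,2)] True by auto
    then have g3: "2/3 < g (1/3)" using Wf_lt[OF a(3,4)] E[of "1/3"] T by auto
    obtain t1 where t1: "0 \<le> t1" "t1 \<le> 1/3" "g t1 = 1/3"
      using IVT'[of g 0 "1/3" "1/3"] g0 g3 gc[of 0 "1/3"] T by auto
    obtain t2 where t2: "t1 \<le> t2" "t2 \<le> 1/3" "g t2 = 2/3"
      using IVT'[of g t1 "2/3" "1/3"] t1 g3 gc[of t1 "1/3"] T by auto
    have "Wf a t2 \<le> Wf a t1" using Wf_mono1[OF a(1,2)] t1 t2 by auto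
    moreover have "Wf a t1 = b" using E[of t1] t1 T Wf_third[OF a(3,4)] by auto
    moreover have "Wf a t2 = 2 + b" using E[of t2] t1 t2 T Wf_twothird[OF a(3,4)] by auto
    ultimately show False by simp
  next
    case False
    then have ab: "b < a" using ne by simp
    have "Wf b (g (2/3)) > 2 + b" using E[of "2/3"] T Wf_twothird[OF a(1,2)] ab by auto
    then have g3: "g (2/3) < 1/3" using Wf_gt[OF a(3,4)] E[of "2/3"] T by auto
    have "Wf b (g T) < b" using E[of T] T Wf_small[OF a] by (auto simp: T_def)
    then have gT: "2/3 < g T" using Wf_lt[OF a(3,4)] E[of T] T by auto
    obtain t1 where t1: "2/3 \<le> t1" "t1 \<le> T" "g t1 = 1/3"
      using IVT'[of g "2/3" "1/3" T] g3 gT gc[of "2/3" T] T by auto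
    obtain t2 where t2: "t1 \<le> t2" "t2 \<le> T" "g t2 = 2/3"
      using IVT'[of g t1 "2/3" T] t1 gT gc[of t1 T] T by auto
    have "Wf a t2 \<le> Wf a t1" using Wf_mono3[OF a(1,2)] t1 t2 by auto
    moreover have "Wf a t1 = b" using E[of t1] t1 T Wf_third[OF a(3,4)] by auto
    moreover have "Wf a t2 = 2 + b" using E[of t2] t1 t2 T Wf_twothird[OF a(3,4)] by auto
    ultimately show False by simp
  qed
qed



lemma countable_subsingleton: "(\<And>x y. x \<in> S \<Longrightarrow> y \<in> S \<Longrightarrow> x = y) \<Longrightarrow> countable S"
proof -
  assume h: "\<And>x y. x \<in> S \<Longrightarrow> y \<in> S \<Longrightarrow> x = y"
  have "finite S"
  proof (cases "S = {}")
    case False then obtain a where "a \<in> S" by auto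
    then have "S \<subseteq> {a}" using h by auto
    then show ?thesis using finite_subset by auto
  qed simp
  then show ?thesis by (rule countable_finite)
qed

lemma Lindelof_closed_discrete_countable:
  assumes L: "Lindelof_space X" and D: "closed_discrete_in X D"
  shows "countable D"
proof -
  have cl: "closedin X D" and iso: "\<forall>x\<in>D. \<exists>U. openin X U \<and> U \<inter> D = {x}"
    using D by (auto simp: closed_discrete_in_def)
  obtain U where U: "\<And>x. x \<in> D \<Longrightarrow> openin X (U x) \<and> U x \<inter> D = {x}"
    using iso by metis
  define \<U> where "\<U> = insert (topspace X - D) (U ` D)"
  have "\<forall>W\<in>\<U>. openin X W" using U cl by (auto simp: \<U>_def)
  moreover have "topspace X \<subseteq> \<Union>\<U>" using U by (fastforce simp: \<U>_def)
  ultimately obtain \<V> where V: "countable \<V>" "\<V> \<subseteq> \<U>" "topspace X \<subseteq> \<Union>\<V>"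
    using L unfolding Lindelof_space_alt by meson
  have Dsub: "D \<subseteq> topspace X" using cl closedin_subset by auto
  have "D \<subseteq> (\<Union>W\<in>\<V>. W \<inter> D)" using V(3) Dsub by auto
  moreover have "countable (\<Union>W\<in>\<V>. W \<inter> D)"
  proof (rule countable_UN[OF V(1)])
    fix W assume "W \<in> \<V>"
    then have "W \<in> \<U>" using V by auto
    then show "countable (W \<inter> D)"
    proof (cases "W = topspace X - D")
      case True
      then have "W \<inter> D = {}" by auto
      then show ?thesis by (metis countable_empty)
    next
      case False
      then obtain x where "x \<in> D" "W = U x" using \<open>W \<in> \<U>\<close> by (auto simp: \<U>_def)
      then show ?thesis using U by auto
    qed
  qed
  ultimately show ?thesis using countable_subset by blast
qed

lemma closed_discrete_subset:
  assumes D: "closed_discrete_in X D" and sub: "D' \<subseteq> D"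
  shows "closed_discrete_in X D'"
proof -
  have cl: "closedin X D" and iso: "\<forall>x\<in>D. \<exists>U. openin X U \<and> U \<inter> D = {x}"
    using D by (auto simp: closed_discrete_in_def)
  have "openin X (topspace X - D')"
  proof (subst openin_subopen, intro ballI)
    fix p assume p: "p \<in> topspace X - D'"
    show "\<exists>T. openin X T \<and> p \<in> T \<and> T \<subseteq> topspace X - D'"
    proof (cases "p \<in> D")
      case True
      then obtain U where "openin X U" "U \<inter> D = {p}" using iso by auto
      then show ?thesis using p sub openin_subset[of X U] by (intro exI[of _ U]) auto
    next
      case False
      then show ?thesis using p sub cl by (intro exI[of _ "topspace X - D"]) auto
    qed
  qed
  then have "closedin X D'" using cl closedin_subset sub
    by (metis closedin_def double_diff order_refl subset_trans)
  moreover have "\<forall>x\<in>D'. \<exists>U. openin X U \<and> U \<inter> D' = {x}"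
  proof
    fix x assume "x \<in> D'"
    then obtain U where "openin X U" "U \<inter> D = {x}" using iso sub by blast
    then show "\<exists>U. openin X U \<and> U \<inter> D' = {x}" using sub \<open>x \<in> D'\<close> by (intro exI[of _ U]) auto
  qed
  ultimately show ?thesis by (simp add: closed_discrete_in_def)
qed

lemma Lindelof_meets_countably:
  assumes L: "Lindelof_space (subtopology X Z)" and Z: "Z \<subseteq> topspace X"
    and disc: "\<forall>p\<in>topspace X. \<exists>V. openin X V \<and> p \<in> V \<and>
                (\<forall>x \<in> D. \<forall>y \<in> D. V \<inter> U x \<noteq> {} \<and> V \<inter> U y \<noteq> {} \<longrightarrow> x = y)"
  shows "countable {x \<in> D. U x \<inter> Z \<noteq> {}}"
proof -
  obtain V where V: "\<And>p. p \<in> topspace X \<Longrightarrow> openin X (V p) \<and> p \<in> V p \<and>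
                (\<forall>x \<in> D. \<forall>y \<in> D. V p \<inter> U x \<noteq> {} \<and> V p \<inter> U y \<noteq> {} \<longrightarrow> x = y)"
    using disc by metis
  define \<U> where "\<U> = (\<lambda>p. V p \<inter> Z) ` Z"
  have "\<forall>W\<in>\<U>. openin (subtopology X Z) W"
    using V Z by (auto simp: \<U>_def openin_subtopology_Int)
  moreover have "topspace (subtopology X Z) \<subseteq> \<Union>\<U>" using V Z by (auto simp: \<U>_def)
  ultimately obtain \<V> where W: "countable \<V>" "\<V> \<subseteq> \<U>" "topspace (subtopology X Z) \<subseteq> \<Union>\<V>"
    using L unfolding Lindelof_space_alt by meson
  have "{x \<in> D. U x \<inter> Z \<noteq> {}} \<subseteq> (\<Union>W\<in>\<V>. {x \<in> D. U x \<inter> W \<noteq> {}})"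
  proof
    fix x assume x: "x \<in> {x \<in> D. U x \<inter> Z \<noteq> {}}"
    then obtain z where "z \<in> U x" "z \<in> Z" by auto
    then obtain W where "W \<in> \<V>" "z \<in> W" using W(3) Z by auto
    then show "x \<in> (\<Union>W\<in>\<V>. {x \<in> D. U x \<inter> W \<noteq> {}})" using x \<open>z \<in> U x\<close> by auto
  qed
  moreover have "countable (\<Union>W\<in>\<V>. {x \<in> D. U x \<inter> W \<noteq> {}})"
  proof (rule countable_UN[OF W(1)])
    fix W assume "W \<in> \<V>"
    then obtain p where p: "p \<in> Z" "W = V p \<inter> Z" using W(2) by (auto simp: \<U>_def)
    show "countable {x \<in> D. U x \<inter> W \<noteq> {}}"
      by (rule countable_subsingleton) (use V[of p] p Z in blast)
  qed
  ultimately show ?thesis using countable_subset by blast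
qed

lemma continuous_map_local:
  assumes f: "\<And>x. x \<in> topspace X \<Longrightarrow> \<exists>V g. openin X V \<and> x \<in> V \<and> continuous_map X Y g \<and> (\<forall>y\<in>V. f y = g y)"
  shows "continuous_map X Y f"
  unfolding continuous_map_atin
proof
  fix x assume x: "x \<in> topspace X"
  obtain V g where V: "openin X V" "x \<in> V" "continuous_map X Y g" "\<forall>y\<in>V. f y = g y"
    using f[OF x] by blast
  have "limitin Y g (g x) (atin X x)" using V(3) x by (simp add: limitin_continuous_map)
  moreover have "eventually (\<lambda>y. g y = f y) (atin X x)"
    unfolding eventually_atin using V by auto
  ultimately show "limitin Y f (f x) (atin X x)"
    using V(2,4) by (metis limitin_transform_eventually)
qed



context includes cardinal_syntax
begin

lemma countable_card_of_nat': "countable A \<longleftrightarrow> |A| \<le>o |UNIV::nat set|"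
  unfolding countable_def card_of_ordLeq[symmetric] by auto

lemma uncountable_cardSuc_le: "\<not> countable A \<Longrightarrow> cardSuc natLeq \<le>o |A|"
proof -
  assume u: "\<not> countable A"
  have "\<not> |A| \<le>o natLeq"
  proof
    assume "|A| \<le>o natLeq"
    then have "|A| \<le>o |UNIV::nat set|" by (rule ordLeq_ordIso_trans[OF _ ordIso_symmetric[OF card_of_nat]])
    then show False using u countable_card_of_nat'[of A] by metis
  qed
  then have "natLeq <o |A|" using not_ordLeq_iff_ordLess[OF natLeq_Well_order card_of_Well_order[of A]] by metis
  then show ?thesis by (rule cardSuc_least[OF natLeq_Card_order card_of_Card_order])
qed

lemma aleph1_subset:
  assumes u: "\<not> countable D"
  shows "\<exists>D' \<subseteq> D. \<not> countable D' \<and> |D'| \<le>o cardSuc natLeq \<and>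
           (\<exists>m. inj_on m D' \<and> m ` D' \<subseteq> {0<..<(1::real)})"
proof -
  define F where "F = Field (cardSuc natLeq)"
  have CS: "Card_order (cardSuc natLeq)" by (rule cardSuc_Card_order[OF natLeq_Card_order])
  have F: "|F| =o cardSuc natLeq" unfolding F_def by (rule card_of_Field_ordIso[OF CS])
  have "|F| \<le>o |D|" by (rule ordIso_ordLeq_trans[OF F uncountable_cardSuc_le[OF u]])
  then obtain f where f: "inj_on f F" "f ` F \<subseteq> D" unfolding card_of_ordLeq[symmetric] by auto
  define D' where "D' = f ` F"
  have "bij_betw f F D'" using f unfolding D'_def by (simp add: bij_betw_imageI)
  then have "|F| =o |D'|" unfolding card_of_ordIso[symmetric] by auto
  then have D'C: "|D'| =o cardSuc natLeq" by (rule ordIso_transitive[OF ordIso_symmetric F])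
  have le: "|D'| \<le>o cardSuc natLeq" using D'C by (simp add: ordIso_iff_ordLeq)
  have unc: "\<not> countable D'"
  proof
    assume "countable D'"
    then have "|D'| \<le>o |UNIV::nat set|" using countable_card_of_nat'[of D'] by metis
    then have "|D'| \<le>o natLeq" by (rule ordLeq_ordIso_trans[OF _ card_of_nat])
    then have "cardSuc natLeq \<le>o natLeq" by (rule ordIso_ordLeq_trans[OF ordIso_symmetric[OF D'C]])
    then show False using cardSuc_greater[OF natLeq_Card_order] not_ordLess_ordLeq by auto
  qed
  have "|D'| \<le>o |{0<..<(1::real)}|"
    by (rule ordLeq_transitive[OF le uncountable_cardSuc_le]) (simp add: uncountable_open_interval)
  then obtain m where "inj_on m D'" "m ` D' \<subseteq> {0<..<(1::real)}" unfolding card_of_ordLeq[symmetric] by auto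
  then show ?thesis using unc le f(2) unfolding D'_def by blast
qed


end


lemma continuous_map_local_sub:
  assumes f: "\<And>x. x \<in> topspace X \<Longrightarrow> \<exists>V. openin X V \<and> x \<in> V \<and> continuous_map (subtopology X V) Y f"
    and im: "f \<in> topspace X \<rightarrow> topspace Y"
  shows "continuous_map X Y f"
  unfolding continuous_map_def
proof (intro conjI allI impI)
  show "f \<in> topspace X \<rightarrow> topspace Y" by (rule im)
  fix W assume W: "openin Y W"
  show "openin X {x \<in> topspace X. f x \<in> W}"
  proof (subst openin_subopen, intro ballI)
    fix x assume x: "x \<in> {x \<in> topspace X. f x \<in> W}"
    then obtain V where V: "openin X V" "x \<in> V" "continuous_map (subtopology X V) Y f" using f by blast
    have "openin (subtopology X V) {z \<in> topspace (subtopology X V). f z \<in> W}"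
      by (rule openin_continuous_map_preimage[OF V(3) W])
    then have o: "openin X {z \<in> topspace (subtopology X V). f z \<in> W}" using openin_trans_full V(1) by blast
    show "\<exists>T. openin X T \<and> x \<in> T \<and> T \<subseteq> {x \<in> topspace X. f x \<in> W}"
      by (rule exI[of _ "{z \<in> topspace (subtopology X V). f z \<in> W}"]) (use o x V in auto)
  qed
qed

lemma Euclidean_space_eu: "Euclidean_space n = top_of_set {y. \<forall>i\<ge>n. y i = 0}"
  by (simp add: Euclidean_space_def euclidean_product_topology)

lemma chart_bump:
  fixes M :: "'a topology" and h :: "'a \<Rightarrow> nat \<Rightarrow> real" and k
  assumes H: "Hausdorff_space M" and U: "openin M U" "x \<in> U" and V: "openin M V" "x \<in> V"
    and hk: "homeomorphic_maps (subtopology M V) (Euclidean_space n) h k" and n: "0 < n"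
  shows "\<exists>\<rho> p. continuous_map M euclideanreal \<rho> \<and>
            (\<forall>y\<in>topspace M. 0 \<le> \<rho> y \<and> \<rho> y \<le> 1 \<and> (\<rho> y < 1 \<longrightarrow> y \<in> U)) \<and>
            continuous_map (top_of_set {0..1}) M p \<and> (\<forall>t\<in>{0..1}. \<rho> (p t) = t)"
proof -
  define S where "S = {y::nat\<Rightarrow>real. \<forall>i\<ge>n. y i = 0}"
  have E: "Euclidean_space n = top_of_set S" unfolding S_def by (rule Euclidean_space_eu)
  have hc: "continuous_map (subtopology M V) (top_of_set S) h" and kc: "continuous_map (top_of_set S) (subtopology M V) k"
    and kh: "\<And>y. y \<in> topspace M \<Longrightarrow> y \<in> V \<Longrightarrow> k (h y) = y"
    and hk': "\<And>y. y \<in> S \<Longrightarrow> h (k y) = y"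
    using hk unfolding homeomorphic_maps_def E by auto
  have hS: "\<And>y. y \<in> topspace M \<Longrightarrow> y \<in> V \<Longrightarrow> h y \<in> S"
    using continuous_map_image_subset_topspace[OF hc] by auto
  have kV: "\<And>y. y \<in> S \<Longrightarrow> k y \<in> topspace M \<and> k y \<in> V"
    using continuous_map_image_subset_topspace[OF kc] by auto
  have xM: "x \<in> topspace M" using U openin_subset by auto
  define c where "c = h x"
  have cS: "c \<in> S" unfolding c_def using hS xM V by auto
  have kc_x: "k c = x" unfolding c_def using kh xM V by auto
  define O' where "O' = {y \<in> S. k y \<in> U}"
  have "openin (subtopology M V) (V \<inter> U)" using openin_subtopology_Int2[OF U(1)] by auto
  then have "openin (top_of_set S) {y \<in> topspace (top_of_set S). k y \<in> V \<inter> U}"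
    by (rule openin_continuous_map_preimage[OF kc])
  moreover have "{y \<in> topspace (top_of_set S). k y \<in> V \<inter> U} = O'" using kV unfolding O'_def by auto
  ultimately have "openin (top_of_set S) O'" by simp
  then obtain T where T: "open T" "O' = S \<inter> T" by (auto simp: openin_open)
  have cT: "c \<in> T" using T cS kc_x U unfolding O'_def by auto
  have "openin (product_topology (\<lambda>i. euclidean) UNIV) T" using T(1) by (simp add: euclidean_product_topology)
  then obtain U' where U': "finite {i. U' i \<noteq> UNIV}" "\<And>i. open (U' i)" "c \<in> PiE UNIV U'" "PiE UNIV U' \<subseteq> T"
    using cT unfolding openin_product_topology_alt by fastforce
  have "\<forall>i. \<exists>e>0. ball (c i) e \<subseteq> U' i"
    using U'(2,3) by (metis PiE_iff UNIV_I open_contains_ball)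
  then obtain e where e: "\<And>i. 0 < e i" "\<And>i. ball (c i) (e i) \<subseteq> U' i" by metis
  define J where "J = {i. U' i \<noteq> UNIV}"
  define \<delta> where "\<delta> = Min (insert 1 (e ` J)) / 2"
  have fin: "finite (insert 1 (e ` J))" using U'(1) unfolding J_def by auto
  have "0 < Min (insert 1 (e ` J))" using fin e(1) by (simp add: Min_gr_iff)
  then have \<delta>pos: "0 < \<delta>" unfolding \<delta>_def by simp
  have \<delta>e: "\<delta> < e i" if "i \<in> J" for i
  proof -
    have "Min (insert 1 (e ` J)) \<le> e i" using fin that by (intro Min_le) auto
    then show ?thesis using e(1)[of i] unfolding \<delta>_def by linarith
  qed
  define d where "d = (\<lambda>y::nat\<Rightarrow>real. \<Sum>i<n. \<bar>y i - c i\<bar>)"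
  have dcont: "continuous_on A d" for A unfolding d_def
    by (intro continuous_intros continuous_on_product_then_coordinatewise continuous_on_id)
  have dnn: "0 \<le> d y" for y unfolding d_def by (simp add: sum_nonneg)
  have dcomp: "\<bar>y i - c i\<bar> \<le> d y" if "i < n" for y i
    unfolding d_def using that by (intro member_le_sum) auto
  define K where "K = {y \<in> S. d y \<le> \<delta>}"
  have KO: "K \<subseteq> O'"
  proof
    fix y assume y: "y \<in> K"
    have "y i \<in> U' i" for i
    proof (cases "i \<in> J")
      case False then show ?thesis unfolding J_def by auto
    next
      case True
      show ?thesis
      proof (cases "i < n")
        case True
        have "dist (y i) (c i) < e i" using dcomp[OF True, of y] y \<delta>e[OF \<open>i \<in> J\<close>] unfolding K_def
          by (simp add: dist_real_def)
        then show ?thesis using e(2)[of i] by (auto simp: dist_commute)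
      next
        case False
        then have "y i = c i" using y cS unfolding K_def S_def by auto
        then show ?thesis using U'(3) by auto
      qed
    qed
    then have "y \<in> PiE UNIV U'" by auto
    then show "y \<in> O'" using U'(4) T(2) y unfolding K_def by auto
  qed
  define P where "P = PiE UNIV (\<lambda>i. if i < n then cball (c i) \<delta> else {0::real})"
  have "compactin (product_topology (\<lambda>i. euclidean) UNIV) P"
    unfolding P_def compactin_PiE by auto
  then have cP: "compact P" by (simp add: euclidean_product_topology)
  have KP: "K \<subseteq> P"
  proof
    fix y assume y: "y \<in> K"
    have "y i \<in> (if i < n then cball (c i) \<delta> else {0})" for i
    proof (cases "i < n")
      case True then show ?thesis using dcomp[OF True, of y] y unfolding K_def
        by (simp add: dist_real_def abs_minus_commute)
    next
      case False then show ?thesis using y unfolding K_def S_def by auto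
    qed
    then show "y \<in> P" unfolding P_def by auto
  qed
  have clS: "closed S" using closedin_Euclidean_imp_closed[OF closedin_topspace[of "Euclidean_space n"]]
    unfolding E by simp
  have "closed {y. d y \<le> \<delta>}" by (rule closed_Collect_le[OF dcont continuous_on_const])
  then have "closed K" unfolding K_def using clS by (simp add: Collect_conj_eq closed_Int setcompr_eq_image)
  then have cK: "compact K" using compact_Int_closed[OF cP] KP by (metis inf.absorb_iff2)
  then have "compactin (top_of_set S) K" using K_def by (auto simp: compactin_subtopology)
  then have "compactin (subtopology M V) (k ` K)" by (rule image_compactin[OF _ kc])
  then have "compactin M (k ` K)" by (simp add: compactin_subtopology)
  then have clK': "closedin M (k ` K)" by (rule compactin_imp_closedin[OF H])
  have K'V: "k ` K \<subseteq> V" using kV unfolding K_def by auto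
  define \<rho> where "\<rho> = (\<lambda>y. if y \<in> V then min 1 (d (h y) / \<delta>) else 1)"
  have \<rho>1: "\<rho> y = 1" if "y \<in> topspace M" "y \<notin> k ` K" for y
  proof (cases "y \<in> V")
    case True
    have "h y \<notin> K" using that True kh by (metis image_eqI)
    then have "d (h y) > \<delta>" using hS[OF that(1) True] unfolding K_def by auto
    then show ?thesis using True \<delta>pos unfolding \<rho>_def by auto
  qed (auto simp: \<rho>_def)
  have \<rho>cont: "continuous_map M euclideanreal \<rho>"
  proof (rule continuous_map_local_sub)
    fix y assume y: "y \<in> topspace M"
    show "\<exists>W. openin M W \<and> y \<in> W \<and> continuous_map (subtopology M W) euclideanreal \<rho>"
    proof (cases "y \<in> V")
      case True
      have "continuous_map (subtopology M V) euclideanreal (\<lambda>y. min 1 (d (h y) / \<delta>))"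
      proof -
        have "continuous_map (top_of_set S) euclideanreal d" using dcont by simp
        then have "continuous_map (subtopology M V) euclideanreal (d \<circ> h)" by (rule continuous_map_compose[OF hc])
        then show ?thesis using \<delta>pos by (intro continuous_intros) (auto simp: o_def)
      qed
      then have "continuous_map (subtopology M V) euclideanreal \<rho>"
        by (rule continuous_map_eq) (auto simp: \<rho>_def)
      then show ?thesis using V(1) True by blast
    next
      case False
      then have "y \<notin> k ` K" using K'V by auto
      moreover have "openin M (topspace M - k ` K)" using clK' by (simp add: closedin_def)
      moreover have "continuous_map (subtopology M (topspace M - k ` K)) euclideanreal \<rho>"
        by (rule continuous_map_eq[of _ _ "\<lambda>_. 1"]) (auto intro: \<rho>1)
      ultimately show ?thesis using y by blast
    qed
  qed simp
  have \<rho>b: "0 \<le> \<rho> y \<and> \<rho> y \<le> 1 \<and> (\<rho> y < 1 \<longrightarrow> y \<in> U)" if y: "y \<in> topspace M" for y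
  proof -
    have "0 \<le> \<rho> y" using dnn \<delta>pos unfolding \<rho>_def by auto
    moreover have "\<rho> y \<le> 1" unfolding \<rho>_def by auto
    moreover have "y \<in> U" if "\<rho> y < 1"
    proof -
      have yV: "y \<in> V" using that unfolding \<rho>_def by (auto split: if_splits)
      then have "d (h y) / \<delta> < 1" using that unfolding \<rho>_def by auto
      then have "d (h y) \<le> \<delta>" using \<delta>pos by (simp add: divide_less_eq)
      then have "h y \<in> K" using hS[OF y yV] unfolding K_def by auto
      then have "k (h y) \<in> U" using KO unfolding O'_def by auto
      then show ?thesis using kh[OF y yV] by simp
    qed
    ultimately show ?thesis by blast
  qed
  define v where "v = (\<lambda>t::real. \<lambda>i. if i = 0 then c 0 + t * \<delta> else c i)"
  have vS: "v t \<in> S" for t using cS n unfolding v_def S_def by auto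
  have dv: "d (v t) = \<bar>t * \<delta>\<bar>" for t
  proof -
    have "d (v t) = (\<Sum>i<n. if i = 0 then \<bar>t * \<delta>\<bar> else 0)"
      unfolding d_def v_def by (intro sum.cong) auto
    also have "\<dots> = \<bar>t * \<delta>\<bar>" using n by simp
    finally show ?thesis .
  qed
  define p where "p = k \<circ> v"
  have "continuous_on {0..1} v" unfolding v_def
  proof (intro continuous_on_coordinatewise_then_product)
    fix i
    show "continuous_on {0..1} (\<lambda>t. if i = 0 then c 0 + t * \<delta> else c i)"
      by (cases "i = 0") (auto intro!: continuous_intros)
  qed
  then have "continuous_map (top_of_set {0..1}) (top_of_set S) v"
    using vS by (simp add: continuous_map_in_subtopology Pi_iff)
  then have "continuous_map (top_of_set {0..1}) (subtopology M V) p"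
    unfolding p_def by (rule continuous_map_compose[OF _ kc])
  then have pc: "continuous_map (top_of_set {0..1}) M p" by (rule continuous_map_into_fulltopology)
  have "\<rho> (p t) = t" if "t \<in> {0..1}" for t
  proof -
    have "p t \<in> V" using kV[OF vS] unfolding p_def by auto
    moreover have "h (p t) = v t" unfolding p_def using hk'[OF vS] by simp
    ultimately have "\<rho> (p t) = min 1 (\<bar>t * \<delta>\<bar> / \<delta>)" unfolding \<rho>_def using dv by simp
    also have "\<dots> = t" using that \<delta>pos by auto
    finally show ?thesis .
  qed
  then show ?thesis using \<rho>cont \<rho>b pc by blast
qed



lemma dim0_case:
  assumes conn: "connected_space M" and H: "Hausdorff_space M"
    and ch: "\<forall>x\<in>topspace M. \<exists>U. openin M U \<and> x \<in> U \<and> subtopology M U homeomorphic_space Euclidean_space 0"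
    and x: "x \<in> topspace M"
  shows "topspace M = {x}"
proof -
  obtain U where U: "openin M U" "x \<in> U" "subtopology M U homeomorphic_space Euclidean_space 0"
    using ch x by blast
  obtain f g where fg: "homeomorphic_maps (subtopology M U) (Euclidean_space 0) f g"
    using U(3) unfolding homeomorphic_space_def by blast
  have UM: "U \<subseteq> topspace M" using U(1) openin_subset by auto
  have "U = {x}"
  proof
    show "U \<subseteq> {x}"
    proof
      fix y assume y: "y \<in> U"
      have f1: "f y = (\<lambda>i. 0)" "f x = (\<lambda>i. 0)"
        using fg y U(2) UM unfolding homeomorphic_maps_def continuous_map_def
        by (auto simp: topspace_Euclidean_space Pi_iff)
      have "g (f y) = y" "g (f x) = x" using fg y U(2) UM unfolding homeomorphic_maps_def by auto
      then show "y \<in> {x}" using f1 by simp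
    qed
  qed (use U in auto)
  then have "openin M {x}" "closedin M {x}"
    using U(1) closedin_t1_singleton[OF Hausdorff_imp_t1_space[OF H] x] by auto
  then show ?thesis using conn unfolding connected_space_clopen_in by blast
qed

lemma disc_unique:
  "\<forall>x\<in>D. \<forall>y\<in>D. V \<inter> U x \<noteq> {} \<and> V \<inter> U y \<noteq> {} \<longrightarrow> x = y \<Longrightarrow> x \<in> D \<Longrightarrow> y \<in> D \<Longrightarrow>
   z \<in> V \<Longrightarrow> z \<in> U x \<Longrightarrow> w \<in> V \<Longrightarrow> w \<in> U y \<Longrightarrow> x = y"
  by blast

theorem theorem8p3:
  fixes M :: "'a topology"
  assumes "is_manifold M"
    and "aleph1_strongly_cwH M"
    and "wS M euclideanreal"
  shows "omega1_compact M"
proof -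
  obtain n where conn: "connected_space M" and H: "Hausdorff_space M"
    and ch: "\<forall>x\<in>topspace M. \<exists>U. openin M U \<and> x \<in> U \<and> subtopology M U homeomorphic_space Euclidean_space n"
    using assms(1) unfolding is_manifold_def by blast
  show ?thesis unfolding omega1_compact_def
  proof (intro allI impI)
    fix D assume D: "closed_discrete_in M D"
    have DM: "D \<subseteq> topspace M" using D closedin_subset unfolding closed_discrete_in_def by auto
    show "countable D"
    proof (rule ccontr)
      assume uD: "\<not> countable D"
      show False
      proof (cases "n = 0")
        case True
        obtain x where "x \<in> D" using uD by (metis countable_empty equals0I)
        then have "topspace M = {x}" using dim0_case[OF conn H] ch True DM by auto
        then have "D \<subseteq> {x}" using DM by auto
        then show False using uD by (metis countable_subset countable_finite finite.emptyI finite_insert)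
      next
        case False
        then have n: "0 < n" by simp
        have nL: "\<not> Lindelof_space M" using Lindelof_closed_discrete_countable[OF _ D] uD by metis
        from aleph1_subset[OF uD] obtain D' where D'all: "D' \<subseteq> D \<and> \<not> countable D' \<and> (card_of D', cardSuc natLeq) \<in> ordLeq \<and>
           (\<exists>m. inj_on m D' \<and> m ` D' \<subseteq> {0<..<(1::real)})" ..
        then have D': "D' \<subseteq> D" "\<not> countable D'" "(card_of D', cardSuc natLeq) \<in> ordLeq" by auto
        from D'all obtain m where m: "inj_on m D' \<and> m ` D' \<subseteq> {0<..<(1::real)}" by (elim conjE exE) auto
        then have m: "inj_on m D'" "m ` D' \<subseteq> {0<..<(1::real)}" by auto
        have m01: "0 < m x" "m x < 1" if "x \<in> D'" for x using m(2) that by auto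
        have D'M: "D' \<subseteq> topspace M" using D'(1) DM by auto
        have cd': "closed_discrete_in M D'" by (rule closed_discrete_subset[OF D D'(1)])
        have cw: "closed_discrete_in M D' \<and> (card_of D', cardSuc natLeq) \<in> ordLeq \<longrightarrow>
        (\<exists>U. (\<forall>x \<in> D'. openin M (U x) \<and> x \<in> U x) \<and>
             (\<forall>p \<in> topspace M. \<exists>V. openin M V \<and> p \<in> V \<and>
                (\<forall>x \<in> D'. \<forall>y \<in> D'. V \<inter> U x \<noteq> {} \<and> V \<inter> U y \<noteq> {} \<longrightarrow> x = y)))"
          using assms(2) unfolding aleph1_strongly_cwH_def by (rule spec)
        from cw[THEN mp, OF conjI[OF cd' D'(3)]] obtain U where UU: "(\<forall>x \<in> D'. openin M (U x) \<and> x \<in> U x) \<and>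
             (\<forall>p \<in> topspace M. \<exists>V. openin M V \<and> p \<in> V \<and>
                (\<forall>x \<in> D'. \<forall>y \<in> D'. V \<inter> U x \<noteq> {} \<and> V \<inter> U y \<noteq> {} \<longrightarrow> x = y))" ..
        then have U: "\<forall>x \<in> D'. openin M (U x) \<and> x \<in> U x"
          and disc: "\<forall>p \<in> topspace M. \<exists>V. openin M V \<and> p \<in> V \<and>
                (\<forall>x \<in> D'. \<forall>y \<in> D'. V \<inter> U x \<noteq> {} \<and> V \<inter> U y \<noteq> {} \<longrightarrow> x = y)"
          by (rule conjunct1, rule conjunct2)
        have disj: "x = y" if xy: "x \<in> D'" "y \<in> D'" "z \<in> U x" "z \<in> U y" for x y z
        proof -
          have "openin M (U x)" using U xy(1) by simp
          then have zM: "z \<in> topspace M" using openin_subset xy(3) by blast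
          from disc[rule_format, OF zM] obtain V where VV: "openin M V \<and> z \<in> V \<and>
                (\<forall>x \<in> D'. \<forall>y \<in> D'. V \<inter> U x \<noteq> {} \<and> V \<inter> U y \<noteq> {} \<longrightarrow> x = y)" ..
          show ?thesis by (rule disc_unique[of D' V U x y z z]) (use VV xy in auto)
        qed
        have ex: "\<forall>x\<in>D'. \<exists>\<rho> p. continuous_map M euclideanreal \<rho> \<and>
            (\<forall>y\<in>topspace M. 0 \<le> \<rho> y \<and> \<rho> y \<le> 1 \<and> (\<rho> y < 1 \<longrightarrow> y \<in> U x)) \<and>
            continuous_map (top_of_set {0..1}) M p \<and> (\<forall>t\<in>{0..1}. \<rho> (p t) = t)"
        proof
          fix x assume x: "x \<in> D'"
          then obtain V where V: "openin M V" "x \<in> V" "subtopology M V homeomorphic_space Euclidean_space n"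
            using ch D'M by blast
          then obtain h k where hk: "homeomorphic_maps (subtopology M V) (Euclidean_space n) h k"
            unfolding homeomorphic_space_def by blast
          show "\<exists>\<rho> p. continuous_map M euclideanreal \<rho> \<and>
            (\<forall>y\<in>topspace M. 0 \<le> \<rho> y \<and> \<rho> y \<le> 1 \<and> (\<rho> y < 1 \<longrightarrow> y \<in> U x)) \<and>
            continuous_map (top_of_set {0..1}) M p \<and> (\<forall>t\<in>{0..1}. \<rho> (p t) = t)"
            by (rule chart_bump[OF H conjunct1[OF U[rule_format, OF x]] conjunct2[OF U[rule_format, OF x]] V(1,2) hk n])
        qed
        from bchoice[OF ex] obtain \<rho> where ex2: "\<forall>x\<in>D'. \<exists>p. continuous_map M euclideanreal (\<rho> x) \<and>
            (\<forall>y\<in>topspace M. 0 \<le> \<rho> x y \<and> \<rho> x y \<le> 1 \<and> (\<rho> x y < 1 \<longrightarrow> y \<in> U x)) \<and>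
            continuous_map (top_of_set {0..1}) M p \<and> (\<forall>t\<in>{0..1}. \<rho> x (p t) = t)"
          ..
        from bchoice[OF ex2] obtain p where "\<forall>x\<in>D'. continuous_map M euclideanreal (\<rho> x) \<and>
            (\<forall>y\<in>topspace M. 0 \<le> \<rho> x y \<and> \<rho> x y \<le> 1 \<and> (\<rho> x y < 1 \<longrightarrow> y \<in> U x)) \<and>
            continuous_map (top_of_set {0..1}) M (p x) \<and> (\<forall>t\<in>{0..1}. \<rho> x (p x t) = t)"
          ..
        then have \<rho>c: "\<And>x. x \<in> D' \<Longrightarrow> continuous_map M euclideanreal (\<rho> x)"
          and \<rho>b: "\<And>x y. x \<in> D' \<Longrightarrow> y \<in> topspace M \<Longrightarrow> 0 \<le> \<rho> x y \<and> \<rho> x y \<le> 1 \<and> (\<rho> x y < 1 \<longrightarrow> y \<in> U x)"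
          and pc: "\<And>x. x \<in> D' \<Longrightarrow> continuous_map (top_of_set {0..1}) M (p x)"
          and \<rho>p: "\<And>x t. x \<in> D' \<Longrightarrow> t \<in> {0..1} \<Longrightarrow> \<rho> x (p x t) = t"
          by auto
        define f where "f = (\<lambda>y. if \<exists>x\<in>D'. \<rho> x y < 1
            then Wf (m (SOME x. x \<in> D' \<and> \<rho> x y < 1)) (\<rho> (SOME x. x \<in> D' \<and> \<rho> x y < 1) y) else 0)"
        have F1: "f y = Wf (m x) (\<rho> x y)" if "x \<in> D'" "y \<in> topspace M" "\<rho> x y < 1" for x y
        proof -
          define x0 where "x0 = (SOME x. x \<in> D' \<and> \<rho> x y < 1)"
          have x0: "x0 \<in> D' \<and> \<rho> x0 y < 1" unfolding x0_def by (rule someI[of _ x]) (use that in auto)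
          have y0: "y \<in> U x0" using \<rho>b[of x0 y] x0 that(2) by auto
          have y1: "y \<in> U x" using \<rho>b[of x y] that by auto
          have "x0 = x" by (rule disj[OF conjunct1[OF x0] that(1) y0 y1])
          then show ?thesis unfolding f_def x0_def[symmetric] using that by auto
        qed
        have F2: "f y = 0" if "\<forall>x\<in>D'. \<not> \<rho> x y < 1" for y
          unfolding f_def using that by auto
        have Wc: "continuous_map euclideanreal euclideanreal (Wf a)" for a
          unfolding continuous_map_iff_continuous2 by (rule Wf_cont)
        have fc: "continuous_map M euclideanreal f"
        proof (rule continuous_map_local)
          fix y assume y: "y \<in> topspace M"
          from disc[rule_format, OF y] obtain V where VV: "openin M V \<and> y \<in> V \<and>
              (\<forall>x \<in> D'. \<forall>z \<in> D'. V \<inter> U x \<noteq> {} \<and> V \<inter> U z \<noteq> {} \<longrightarrow> x = z)" ..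
          then have V: "openin M V" "y \<in> V"
              "\<forall>x \<in> D'. \<forall>z \<in> D'. V \<inter> U x \<noteq> {} \<and> V \<inter> U z \<noteq> {} \<longrightarrow> x = z" by auto
          have VM: "V \<subseteq> topspace M" using V(1) openin_subset by auto
          show "\<exists>V g. openin M V \<and> y \<in> V \<and> continuous_map M euclideanreal g \<and> (\<forall>y\<in>V. f y = g y)"
          proof (cases "\<exists>x\<in>D'. V \<inter> U x \<noteq> {}")
            case True
            then obtain x where x: "x \<in> D'" "V \<inter> U x \<noteq> {}" by blast
            then obtain w where w: "w \<in> V" "w \<in> U x" by blast
            have "f z = Wf (m x) (\<rho> x z)" if z: "z \<in> V" for z
            proof (cases "\<rho> x z < 1")
              case True then show ?thesis using F1 x z VM by auto
            next
              case False
              have "\<forall>x'\<in>D'. \<not> \<rho> x' z < 1"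
              proof (intro ballI notI)
                fix x' assume x': "x' \<in> D'" "\<rho> x' z < 1"
                then have "z \<in> U x'" using \<rho>b z VM by blast
                then have "x' = x" by (rule disc_unique[OF V(3) x'(1) x(1) z _ w(1) w(2)])
                then show False using False x' by simp
              qed
              then have "f z = 0" by (rule F2)
              moreover have "\<rho> x z = 1" using False \<rho>b[OF x(1), of z] z VM by auto
              ultimately show ?thesis using Wf_ge1[OF m01[OF x(1)]] by simp
            qed
            moreover have "continuous_map M euclideanreal (Wf (m x) \<circ> \<rho> x)"
              by (rule continuous_map_compose[OF \<rho>c[OF x(1)] Wc])
            ultimately show ?thesis using V by (intro exI[of _ V] exI[of _ "Wf (m x) \<circ> \<rho> x"]) auto
          next
            case False
            have "f z = 0" if z: "z \<in> V" for z
            proof (rule F2, intro ballI notI)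
              fix x' assume x': "x' \<in> D'" "\<rho> x' z < 1"
              then have "z \<in> U x'" using \<rho>b z VM by blast
              then show False using False x'(1) z by auto
            qed
            then show ?thesis using V by (intro exI[of _ V] exI[of _ "\<lambda>_. 0"]) auto
          qed
        qed
        obtain Z r where Z: "Z \<subseteq> topspace M" "Lindelof_space (subtopology M Z)"
            "continuous_map M (subtopology M Z) r" "\<forall>x \<in> topspace M - Z. f (r x) = f x"
          using assms(3) nL fc unfolding wS_def by blast
        have "countable {x \<in> D'. U x \<inter> Z \<noteq> {}}"
          by (rule Lindelof_meets_countably[OF Z(2) Z(1) disc])
        then obtain \<alpha> where \<alpha>: "\<alpha> \<in> D'" "U \<alpha> \<inter> Z = {}"
          using D'(2) countable_subset[of D' "{x \<in> D'. U x \<inter> Z \<noteq> {}}"] by blast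
        have rZ: "r y \<in> topspace M \<and> r y \<in> Z" if "y \<in> topspace M" for y
          using continuous_map_image_subset_topspace[OF Z(3)] that Z(1) by auto
        define q where "q = r \<circ> p \<alpha>"
        have qc: "continuous_map (top_of_set {0..1}) M q"
          unfolding q_def by (rule continuous_map_compose[OF pc[OF \<alpha>(1)] continuous_map_into_fulltopology[OF Z(3)]])
        have pM: "p \<alpha> t \<in> topspace M" if "t \<in> {0..1}" for t
          using continuous_map_image_subset_topspace[OF pc[OF \<alpha>(1)]] that by auto
        have qM: "q t \<in> topspace M \<and> q t \<in> Z" if "t \<in> {0..1}" for t
          unfolding q_def using rZ pM that by auto
        have fq: "f (q t) = Wf (m \<alpha>) t" if "0 \<le> t" "t < 1" for t
        proof -
          have t: "t \<in> {0..1}" using that by auto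
          have "\<rho> \<alpha> (p \<alpha> t) < 1" using \<rho>p[OF \<alpha>(1) t] that by simp
          then have "p \<alpha> t \<in> U \<alpha>" using \<rho>b[OF \<alpha>(1) pM[OF t]] by blast
          then have "p \<alpha> t \<notin> Z" using \<alpha>(2) by blast
          then have "f (q t) = f (p \<alpha> t)" unfolding q_def using Z(4) pM[OF t] by auto
          also have "\<dots> = Wf (m \<alpha>) (\<rho> \<alpha> (p \<alpha> t))" using F1[OF \<alpha>(1) pM[OF t]] \<open>\<rho> \<alpha> (p \<alpha> t) < 1\<close> by simp
          finally show ?thesis using \<rho>p[OF \<alpha>(1) t] by simp
        qed
        have fpos: "\<exists>\<beta>\<in>D'. \<rho> \<beta> (q t) < 1" if "0 \<le> t" "t < 1" for t
        proof (rule ccontr)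
          assume "\<not> (\<exists>\<beta>\<in>D'. \<rho> \<beta> (q t) < 1)"
          then have "f (q t) = 0" by (intro F2) auto
          moreover have "0 < Wf (m \<alpha>) t" using Wf_pos[OF m01[OF \<alpha>(1)]] that by auto
          ultimately show False using fq[OF that] by simp
        qed
        obtain \<beta> where \<beta>: "\<beta> \<in> D'" "\<rho> \<beta> (q 0) < 1" using fpos[of 0] by auto
        have "\<beta> \<noteq> \<alpha>"
        proof
          assume "\<beta> = \<alpha>"
          then have "q 0 \<in> U \<alpha>" using \<rho>b[OF \<beta>(1)] qM[of 0] \<beta>(2) by auto
          then show False using qM[of 0] \<alpha>(2) by auto
        qed
        define a where "a = m \<alpha>"
        define b where "b = m \<beta>"
        have ab: "0 < a" "a < 1" "0 < b" "b < 1" unfolding a_def b_def using m01 \<alpha>(1) \<beta>(1) by auto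
        define T where "T = 1 - b/9"
        have T: "0 < T" "T < 1" using ab unfolding T_def by auto
        define g where "g = (\<lambda>t. \<rho> \<beta> (q t))"
        have gc1: "continuous_on {0..1} (\<lambda>t. \<rho> \<gamma> (q t))" if "\<gamma> \<in> D'" for \<gamma>
        proof -
          have "continuous_map (top_of_set {0..1}) euclideanreal (\<rho> \<gamma> \<circ> q)"
            by (rule continuous_map_compose[OF qc \<rho>c[OF that]])
          then show ?thesis by (simp add: o_def)
        qed
        have gc: "continuous_on {0..1} g" unfolding g_def by (rule gc1[OF \<beta>(1)])
        have glt: "g t < 1" if "t \<in> {0..T}" for t
        proof (rule ccontr)
          assume "\<not> g t < 1"
          define S0 where "S0 = {0..T} \<inter> g -` {1..}"
          have tS0: "t \<in> S0" using that \<open>\<not> g t < 1\<close> unfolding S0_def by auto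
          have "closed S0" unfolding S0_def
            by (rule continuous_closed_preimage) (use continuous_on_subset[OF gc] T in auto)
          moreover have "bdd_below S0" unfolding S0_def by (rule bdd_belowI[of _ 0]) auto
          ultimately have t1S: "Inf S0 \<in> S0" using closed_contains_Inf tS0 by blast
          define t1 where "t1 = Inf S0"
          have below: "g s < 1" if "0 \<le> s" "s < t1" for s
          proof (rule ccontr)
            assume "\<not> g s < 1"
            then have "s \<in> S0" using that t1S unfolding S0_def t1_def by auto
            then have "t1 \<le> s" unfolding t1_def using \<open>bdd_below S0\<close> by (rule cInf_lower)
            then show False using that by simp
          qed
          have t1r: "0 \<le> t1" "t1 \<le> T" "1 \<le> g t1" using t1S unfolding S0_def t1_def by auto
          have "t1 \<noteq> 0" using t1r \<beta>(2) unfolding g_def by auto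
          then have t1p: "0 < t1" using t1r by simp
          obtain \<gamma> where \<gamma>: "\<gamma> \<in> D'" "\<rho> \<gamma> (q t1) < 1" using fpos[of t1] t1r T by auto
          have "\<exists>d>0. \<forall>s\<in>{0..1}. dist s t1 < d \<longrightarrow> dist (\<rho> \<gamma> (q s)) (\<rho> \<gamma> (q t1)) < 1 - \<rho> \<gamma> (q t1)"
            using gc1[OF \<gamma>(1)] t1r T \<gamma>(2) unfolding continuous_on_iff by auto
          then obtain d where d: "0 < d" "\<And>s. s \<in> {0..1} \<Longrightarrow> dist s t1 < d \<Longrightarrow> dist (\<rho> \<gamma> (q s)) (\<rho> \<gamma> (q t1)) < 1 - \<rho> \<gamma> (q t1)"
            by blast
          define s where "s = max 0 (t1 - d/2)"
          have s: "0 \<le> s" "s < t1" "s \<in> {0..1}" "dist s t1 < d" using d(1) t1p t1r T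
            unfolding s_def by (auto simp: dist_real_def)
          have "\<rho> \<gamma> (q s) < 1" using d(2)[OF s(3,4)] by (auto simp: dist_real_def)
          then have "q s \<in> U \<gamma>" using \<rho>b[OF \<gamma>(1)] qM[OF s(3)] by blast
          moreover have "q s \<in> U \<beta>" using below[OF s(1,2)] \<rho>b[OF \<beta>(1)] qM[OF s(3)] unfolding g_def by blast
          ultimately have "\<gamma> = \<beta>" by (rule disj[OF \<gamma>(1) \<beta>(1)])
          then show False using \<gamma>(2) t1r(3) unfolding g_def by simp
        qed
        have "a = b"
        proof (rule lift_lemma[OF ab])
          show "continuous_on {0..1 - b/9} g" using continuous_on_subset[OF gc] T unfolding T_def by auto
          fix t assume t: "t \<in> {0..1 - b/9}"
          then have t01: "t \<in> {0..1}" "t < 1" using T unfolding T_def by auto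
          show "0 \<le> g t" using \<rho>b[OF \<beta>(1) conjunct1[OF qM[OF t01(1)]]] unfolding g_def by blast
          have "f (q t) = Wf b (g t)" using F1[OF \<beta>(1) conjunct1[OF qM[OF t01(1)]]] glt[of t] t
            unfolding g_def b_def T_def by auto
          then show "Wf b (g t) = Wf a t" using fq[of t] t01 unfolding a_def by auto
        qed
        then have "\<alpha> = \<beta>" using m(1) \<alpha>(1) \<beta>(1) unfolding a_def b_def by (meson inj_onD)
        then show False using \<open>\<beta> \<noteq> \<alpha>\<close> by simp
      qed
    qed
  qed
qed

end
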